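(* Let $m,n\ge0$, $0\le k\le\min(m,n)$, and let $i,j$ be integers with $0\le i\le m$, $0\le j\le n$, $k\le i+j\le m+n-k$. Then $$C_{m,n,k}(i,j)=\frac{(-1)^k}{D(m,n,k)}\,c_{m,n,k}(m-i,\,n-j),$$ where $$D(m,n,k)=\binom{m+n-k+1}{k}\binom{m+n-2k}{m-k}=\frac{m+n-k+1}{m+n-2k+1}\binom{m+n-k}{m-k,\ n-k,\ k}.$$
   Context: Multinomial coefficients: $\binom{a+b+c}{a,\ b,\ c}=\frac{(a+b+c)!}{a!\,b!\,c!}$. Let $e,f,h$ be the standard basis of $\mathfrak{sl}(2,\mathbb{C})$. $V(n)$ is the irreducible representation of highest weight $n$ with fixed highest weight vector $\phi_n$; $\{f^i\phi_n\}_{0\le i\le n}$ is a basis, $f^{n+1}\phi_n=0$. $\mathfrak{sl}(2)$ acts on $V(m)\otimes V(n)$ by $X(v\otimes w)=Xv\otimes w+v\otimes Xw$. For $0\le k\le\min(m,n)$, $\phi_{m,n,k}=\sum_{l=0}^{k}(-1)^l\binom{m-l}{k-l}\binom{n-k+l}{l} f^l\phi_m\otimes f^{k-l}\phi_n$; it is a highest weight vector of weight $m+n-2k$ generating a copy of $V(m+n-2k)$ with basis $f^a\phi_{m,n,k}$, $0\le a\le m+n-2k$, and $V(m)\otimes V(n)$ is the direct sum of these copies. The coordinates $c_{m,n,k}(i,j)$ are defined by $f^{p-k}\phi_{m,n,k}=\sum_{i+j=p,\,0\le i\le m,\,0\le j\le n} c_{m,n,k}(i,j)\, f^i\phi_m\otimes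 f^j\phi_n$ for $k\le p\le m+n-k$. The Clebsch–Gordan coefficients $C_{m,n,k}(i,j)$ are defined by $f^i\phi_m\otimes f^j\phi_n=\sum_{k} C_{m,n,k}(i,j)\, f^{i+j-k}\phi_{m,n,k}$, sum over $0\le k\le\min(m,n)$ with $k\le i+j\le m+n-k$. *)

theory Defs
  imports Complex_Main
begin

text \<open>Model of V(m) \<otimes> V(n): a vector is a function nat \<Rightarrow> nat \<Rightarrow> complex, where v i j is the
coefficient of the basis vector f^i phi_m \<otimes> f^j phi_n (0 \<le> i \<le> m, 0 \<le> j \<le> n);
entries outside this box are kept zero.\<close>

type_synonym tvec = "nat \<Rightarrow> nat \<Rightarrow> complex"

definition basis_vec :: "nat \<Rightarrow> nat \<Rightarrow> nat \<Rightarrow> nat \<Rightarrow> tvec" where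
  "basis_vec m n i j = (\<lambda>a b. if a = i \<and> b = j \<and> i \<le> m \<and> j \<le> n then 1 else 0)"

text \<open>Action of f on V(m) \<otimes> V(n): f(f^a phi_m \<otimes> f^b phi_n) =
  f^(a+1) phi_m \<otimes> f^b phi_n + f^a phi_m \<otimes> f^(b+1) phi_n, with f^(m+1) phi_m = 0, f^(n+1) phi_n = 0.\<close>
definition f_act :: "nat \<Rightarrow> nat \<Rightarrow> tvec \<Rightarrow> tvec" where
  "f_act m n v = (\<lambda>a b. if a \<le> m \<and> b \<le> n then
       (if 1 \<le> a then v (a - 1) b else 0) + (if 1 \<le> b then v a (b - 1) else 0)
     else 0)"

definition f_pow :: "nat \<Rightarrow> nat \<Rightarrow> nat \<Rightarrow> tvec \<Rightarrow> tvec" where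
  "f_pow m n p = (f_act m n) ^^ p"

definition phi :: "nat \<Rightarrow> nat \<Rightarrow> nat \<Rightarrow> tvec" where
  "phi m n k = (\<lambda>a b. \<Sum>l = 0..k. (-1) ^ l * of_nat ((m - l) choose (k - l))
        * of_nat ((n - k + l) choose l) * basis_vec m n l (k - l) a b)"

definition c_coord :: "nat \<Rightarrow> nat \<Rightarrow> nat \<Rightarrow> nat \<Rightarrow> nat \<Rightarrow> complex" where
  "c_coord m n k i j = f_pow m n (i + j - k) (phi m n k) i j"

definition adm :: "nat \<Rightarrow> nat \<Rightarrow> nat \<Rightarrow> nat \<Rightarrow> nat \<Rightarrow> bool" where
  "adm m n i j k \<longleftrightarrow> k \<le> min m n \<and> k \<le> i + j \<and> i + j + k \<le> m + n"

definition CG_family :: "nat \<Rightarrow> nat \<Rightarrow> nat \<Rightarrow> nat \<Rightarrow> nat \<Rightarrow> complex" where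
  "CG_family m n i j = (THE C. (\<forall>k. \<not> adm m n i j k \<longrightarrow> C k = 0) \<and>
      basis_vec m n i j = (\<lambda>a b. \<Sum>k = 0..min m n. C k * f_pow m n (i + j - k) (phi m n k) a b))"

definition CG :: "nat \<Rightarrow> nat \<Rightarrow> nat \<Rightarrow> nat \<Rightarrow> nat \<Rightarrow> complex" where
  "CG m n k i j = CG_family m n i j k"

definition Dnorm :: "nat \<Rightarrow> nat \<Rightarrow> nat \<Rightarrow> nat" where
  "Dnorm m n k = ((m + n - k + 1) choose k) * ((m + n - 2 * k) choose (m - k))"

end

theory Submission
  imports Defs "Jordan_Normal_Form.Determinant"
begin


lemma f_pow_0[simp]: "f_pow m n 0 v = v" by (simp add: f_pow_def)
lemma f_pow_Suc: "f_pow m n (Suc s) v = f_act m n (f_pow m n s v)" by (simp add: f_pow_def)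
lemma f_pow_add: "f_pow m n (s + t) v = f_pow m n s (f_pow m n t v)" by (simp add: f_pow_def funpow_add)
lemma f_pow_Suc': "f_pow m n (Suc s) v = f_pow m n s (f_act m n v)"
  using f_pow_add[of m n s 1 v] by (simp add: f_pow_def)

definition boxed :: "nat \<Rightarrow> nat \<Rightarrow> tvec \<Rightarrow> bool" where
  "boxed m n v \<longleftrightarrow> (\<forall>a b. \<not> (a \<le> m \<and> b \<le> n) \<longrightarrow> v a b = 0)"
definition adiag :: "nat \<Rightarrow> tvec \<Rightarrow> bool" where
  "adiag p v \<longleftrightarrow> (\<forall>a b. a + b \<noteq> p \<longrightarrow> v a b = 0)"

lemma boxed_f_act: "boxed m n (f_act m n v)" by (simp add: boxed_def f_act_def)
lemma boxed_f_pow: "boxed m n v \<Longrightarrow> boxed m n (f_pow m n s v)"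
  by (cases s) (simp_all add: f_pow_Suc boxed_f_act)
lemma adiag_f_act: "adiag p v \<Longrightarrow> adiag (Suc p) (f_act m n v)"
  unfolding adiag_def f_act_def by auto
lemma adiag_f_pow: "adiag p v \<Longrightarrow> adiag (p + s) (f_pow m n s v)"
  by (induction s) (auto simp: f_pow_Suc adiag_f_act)

definition coef :: "nat \<Rightarrow> nat \<Rightarrow> nat \<Rightarrow> nat \<Rightarrow> complex" where
  "coef m n k l = (-1) ^ l * of_nat ((m - l) choose (k - l)) * of_nat ((n - k + l) choose l)"

lemma phi_explicit: assumes "k \<le> min m n"
  shows "phi m n k a b = (if a \<le> k \<and> b = k - a then coef m n k a else 0)"
proof -
  have "phi m n k a b = (\<Sum>l = 0..k. if l = a then (if a \<le> k \<and> b = k - a then coef m n k a else 0) else 0)"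
    unfolding phi_def basis_vec_def coef_def
    by (rule sum.cong) (use assms in auto)
  also have "\<dots> = (if a \<le> k \<and> b = k - a then coef m n k a else 0)"
    by (simp add: sum.delta)
  finally show ?thesis .
qed

lemma boxed_phi: "k \<le> min m n \<Longrightarrow> boxed m n (phi m n k)"
  by (auto simp: boxed_def phi_explicit)
lemma adiag_phi: "k \<le> min m n \<Longrightarrow> adiag k (phi m n k)"
  by (auto simp: adiag_def phi_explicit)

definition e_act :: "nat \<Rightarrow> nat \<Rightarrow> tvec \<Rightarrow> tvec" where
  "e_act m n v = (\<lambda>a b. if a \<le> m \<and> b \<le> n then
      of_nat ((a + 1) * (m - a)) * v (a + 1) b + of_nat ((b + 1) * (n - b)) * v a (b + 1) else 0)"

lemma e_phi: assumes "k \<le> min m n" shows "e_act m n (phi m n k) = (\<lambda>a b. 0)"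
proof (intro ext)
  fix a b
  show "e_act m n (phi m n k) a b = 0"
  proof (cases "a \<le> m \<and> b \<le> n \<and> a + b + 1 = k")
    case True
    then have ak: "a < k" and b: "b = k - a - 1" by auto
    have i1: "(m - a) * ((m - a - 1) choose (k - a - 1)) = (k - a) * ((m - a) choose (k - a))"
      using times_binomial_minus1_eq[of "k - a" "m - a"] ak by (simp add: diff_diff_add)
    have i2: "(a + 1) * ((n - k + a + 1) choose (a + 1)) = (n - k + a + 1) * ((n - k + a) choose a)"
      using Suc_times_binomial[of a "n - k + a"] by simp
    have e1: "n - k + (a + 1) = n - k + a + 1" using assms ak by simp
    define X1 where "X1 = (m - a - 1) choose (k - a - 1)"
    define Y1 where "Y1 = (n - k + a + 1) choose (a + 1)"
    define X0 where "X0 = (m - a) choose (k - a)"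
    define Y0 where "Y0 = (n - k + a) choose a"
    define A where "A = a + 1"
    define B where "B = m - a"
    define C where "C = k - a"
    define E where "E = n - k + a + 1"
    have c1: "coef m n k (a + 1) = (-1) ^ (a + 1) * of_nat X1 * of_nat Y1"
      unfolding coef_def X1_def Y1_def using e1 by (simp add: diff_diff_add)
    have c0: "coef m n k a = (-1) ^ a * of_nat X0 * of_nat Y0"
      unfolding coef_def X0_def Y0_def by simp
    have bb1: "b + 1 = k - a" "n - b = n - k + a + 1" using b ak assms by auto
    have bb: "(b + 1) * (n - b) = C * E" unfolding C_def E_def bb1 ..
    have i1': "B * X1 = C * X0" using i1 unfolding B_def X1_def C_def X0_def .
    have i2': "A * Y1 = E * Y0" using i2 unfolding A_def Y1_def E_def Y0_def .
    have "of_nat (A * B) * ((-1) ^ (a + 1) * of_nat X1 * of_nat Y1) + of_nat (C * E) * ((-1) ^ a * of_nat X0 * of_nat Y0) = (0::complex)"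
    proof -
      have "of_nat (A * B) * ((-1) ^ (a + 1) * of_nat X1 * of_nat Y1) = - ((-1) ^ a * of_nat (B * X1) * (of_nat (A * Y1) :: complex))"
        by (simp add: of_nat_mult algebra_simps)
      also have "\<dots> = - ((-1) ^ a * of_nat (C * X0) * of_nat (E * Y0))" using i1' i2' by simp
      also have "\<dots> = - (of_nat (C * E) * ((-1) ^ a * of_nat X0 * of_nat Y0))"
        by (simp add: of_nat_mult algebra_simps)
      finally show ?thesis by simp
    qed
    then have "of_nat ((a + 1) * (m - a)) * coef m n k (a + 1) + of_nat ((b + 1) * (n - b)) * coef m n k a = (0::complex)"
      unfolding c1 c0 bb by (simp add: A_def B_def)
    moreover have "phi m n k (a + 1) b = coef m n k (a + 1)" using True assms b by (simp add: phi_explicit)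
    moreover have "phi m n k a (b + 1) = coef m n k a" using True assms bb1 by (simp add: phi_explicit)
    moreover have "e_act m n (phi m n k) a b = of_nat ((a + 1) * (m - a)) * phi m n k (a + 1) b + of_nat ((b + 1) * (n - b)) * phi m n k a (b + 1)"
      using True by (simp add: e_act_def)
    ultimately show ?thesis by simp
  next
    case False
    then show ?thesis using assms by (auto simp: e_act_def phi_explicit)
  qed
qed


lemma f_act_in: "a \<le> m \<Longrightarrow> b \<le> n \<Longrightarrow> f_act m n v a b =
   (if 1 \<le> a then v (a - 1) b else 0) + (if 1 \<le> b then v a (b - 1) else 0)"
  by (simp add: f_act_def)

lemma e_act_in: "a \<le> m \<Longrightarrow> b \<le> n \<Longrightarrow> e_act m n v a b =
   (of_nat a + 1) * (of_nat m - of_nat a) * v (a + 1) b + (of_nat b + 1) * (of_nat n - of_nat b) * v a (b + 1)"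
proof -
  assume h: "a \<le> m" "b \<le> n"
  have "of_nat ((a + 1) * (m - a)) = (of_nat a + 1) * (of_nat m - of_nat a :: complex)"
    by (simp only: of_nat_mult of_nat_diff[OF h(1)] of_nat_add of_nat_1)
  moreover have "of_nat ((b + 1) * (n - b)) = (of_nat b + 1) * (of_nat n - of_nat b :: complex)"
    by (simp only: of_nat_mult of_nat_diff[OF h(2)] of_nat_add of_nat_1)
  ultimately show ?thesis using h by (simp only: e_act_def if_True simp_thms)
qed

lemma comm: assumes "boxed m n v"
  shows "e_act m n (f_act m n v) a b = f_act m n (e_act m n v) a b
          + (of_nat (m + n) - of_nat (2 * (a + b))) * v a b"
proof (cases "a \<le> m \<and> b \<le> n")
  case False
  then show ?thesis using assms by (auto simp: e_act_def f_act_def boxed_def)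
next
  case True
  then have am: "a \<le> m" and bn: "b \<le> n" by auto
  have L: "e_act m n (f_act m n v) a b = (of_nat a + 1) * (of_nat m - of_nat a) * (v a b + (if 1 \<le> b then v (a+1) (b-1) else 0))
      + (of_nat b + 1) * (of_nat n - of_nat b) * (v a b + (if 1 \<le> a then v (a-1) (b+1) else 0))"
  proof -
    have "(of_nat a + 1) * (of_nat m - of_nat a) * f_act m n v (a+1) b = (of_nat a + 1) * (of_nat m - of_nat a) * (v a b + (if 1 \<le> b then v (a+1) (b-1) else (0::complex)))"
      by (cases "a = m") (use am bn in \<open>auto simp: f_act_def\<close>)
    moreover have "(of_nat b + 1) * (of_nat n - of_nat b) * f_act m n v a (b+1) = (of_nat b + 1) * (of_nat n - of_nat b) * (v a b + (if 1 \<le> a then v (a-1) (b+1) else (0::complex)))"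
      by (cases "b = n") (use am bn in \<open>auto simp: f_act_def\<close>)
    ultimately show ?thesis by (simp only: e_act_in[OF am bn])
  qed
  have R: "f_act m n (e_act m n v) a b =
      (of_nat a * (of_nat m - of_nat a + 1) * v a b + (if 1 \<le> a then (of_nat b + 1) * (of_nat n - of_nat b) * v (a-1) (b+1) else 0))
    + ((if 1 \<le> b then (of_nat a + 1) * (of_nat m - of_nat a) * v (a+1) (b-1) else 0) + of_nat b * (of_nat n - of_nat b + 1) * v a b)"
  proof (cases a)
    case 0
    then show ?thesis using am bn by (cases b) (simp_all add: f_act_in e_act_in algebra_simps)
  next
    case (Suc a')
    then show ?thesis using am bn by (cases b) (simp_all add: f_act_in e_act_in algebra_simps)
  qed
  show ?thesis unfolding L R using am bn by (simp add: algebra_simps of_nat_diff)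
qed


lemma f_act_scale: "f_act m n (\<lambda>a b. c * w a b) = (\<lambda>a b. c * f_act m n w a b)"
  by (auto simp: f_act_def fun_eq_iff algebra_simps)

lemma f_act_zero: "f_act m n (\<lambda>a b. 0) = (\<lambda>a b. 0)"
  by (auto simp: f_act_def fun_eq_iff)

lemma e_act_zero: "e_act m n (\<lambda>a b. 0) = (\<lambda>a b. 0)"
  by (auto simp: e_act_def fun_eq_iff)

lemma sl2:
  assumes "boxed m n v" "adiag p v" "e_act m n v = (\<lambda>a b. 0)"
  shows "e_act m n (f_pow m n (Suc s) v) = (\<lambda>a b. of_nat (Suc s) * (of_nat (m + n) - of_nat (2 * p + s)) * f_pow m n s v a b)"
proof (induction s)
  case 0
  show ?case
  proof (intro ext)
    fix a b
    have "e_act m n (f_pow m n (Suc 0) v) a b = f_act m n (e_act m n v) a b + (of_nat (m+n) - of_nat (2*(a+b))) * v a b"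
      using comm[OF assms(1)] by (simp add: f_pow_Suc)
    also have "\<dots> = (of_nat (m+n) - of_nat (2*p)) * v a b"
      unfolding assms(3) f_act_zero using assms(2) unfolding adiag_def
      by (cases "a+b = p") simp_all
    finally show "e_act m n (f_pow m n (Suc 0) v) a b = of_nat (Suc 0) * (of_nat (m+n) - of_nat (2*p+0)) * f_pow m n 0 v a b"
      by simp
  qed
next
  case (Suc s)
  show ?case
  proof (intro ext)
    fix a b
    let ?w = "f_pow m n (Suc s) v"
    have bw: "boxed m n ?w" using boxed_f_pow[OF assms(1)] .
    have aw: "adiag (p + Suc s) ?w" by (rule adiag_f_pow[OF assms(2)])
    have "e_act m n (f_pow m n (Suc (Suc s)) v) a b = f_act m n (e_act m n ?w) a b + (of_nat (m+n) - of_nat (2*(a+b))) * ?w a b"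
      using comm[OF bw] by (simp only: f_pow_Suc[of m n "Suc s"])
    also have "f_act m n (e_act m n ?w) a b = of_nat (Suc s) * (of_nat (m + n) - of_nat (2 * p + s)) * ?w a b"
      unfolding Suc.IH f_act_scale by (simp add: f_pow_Suc)
    also have "(of_nat (m+n) - of_nat (2*(a+b))) * ?w a b = (of_nat (m+n) - of_nat (2*(p + Suc s))) * ?w a b"
      using aw unfolding adiag_def by (cases "a+b = p + Suc s") simp_all
    finally show "e_act m n (f_pow m n (Suc (Suc s)) v) a b =
        of_nat (Suc (Suc s)) * (of_nat (m + n) - of_nat (2 * p + Suc s)) * f_pow m n (Suc s) v a b"
      by (simp add: algebra_simps)
  qed
qed

lemma vanish:
  assumes "boxed m n w" "adiag p w" "e_act m n w = (\<lambda>a b. 0)" "m + n < 2 * p"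
  shows "w = (\<lambda>a b. 0)"
proof -
  have top: "f_pow m n (m+n+1) w = (\<lambda>a b. 0)"
  proof (intro ext)
    fix a b
    have "boxed m n (f_pow m n (m+n+1) w)" by (rule boxed_f_pow[OF assms(1)])
    moreover have "adiag (p + (m+n+1)) (f_pow m n (m+n+1) w)" by (rule adiag_f_pow[OF assms(2)])
    ultimately show "f_pow m n (m+n+1) w a b = 0"
      unfolding boxed_def adiag_def by (cases "a \<le> m \<and> b \<le> n") auto
  qed
  have step: "f_pow m n s w = (\<lambda>a b. 0)" if h: "f_pow m n (Suc s) w = (\<lambda>a b. 0)" for s
  proof (intro ext)
    fix a b
    have "(\<lambda>a b. of_nat (Suc s) * (of_nat (m + n) - of_nat (2 * p + s)) * f_pow m n s w a b) = (\<lambda>a b. 0)"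
      using sl2[OF assms(1-3), of s] h e_act_zero by simp
    then have "of_nat (Suc s) * (of_nat (m + n) - of_nat (2 * p + s)) * f_pow m n s w a b = (0::complex)"
      by (metis)
    moreover have "(of_nat (m + n) :: complex) \<noteq> of_nat (2 * p + s)"
      using assms(4) by (metis of_nat_eq_iff less_irrefl trans_less_add1)
    moreover have c1: "(of_nat (Suc s)::complex) \<noteq> 0" by (rule of_nat_neq_0)
    ultimately show "f_pow m n s w a b = 0" by (metis mult_eq_0_iff right_minus_eq)
  qed
  have "f_pow m n (m+n+1 - t) w = (\<lambda>a b. 0)" for t
  proof (induction t)
    case 0 then show ?case using top by simp
  next
    case (Suc t)
    show ?case
    proof (cases "m+n+1 - t")
      case 0 then show ?thesis using Suc.IH by simp
    next
      case (Suc s)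
      then have "m + n + 1 - Suc t = s" by simp
      then show ?thesis using step[of s] Suc.IH \<open>m+n+1-t = Suc s\<close> by simp
    qed
  qed
  from this[of "m+n+1"] show ?thesis by simp
qed

definition Bf :: "nat \<Rightarrow> nat \<Rightarrow> tvec \<Rightarrow> tvec \<Rightarrow> complex" where
  "Bf m n x y = (\<Sum>a\<le>m. \<Sum>b\<le>n. x a b * y (m - a) (n - b))"

lemma flip1: "(\<Sum>a\<le>m. g (m - a)) = (\<Sum>a\<le>(m::nat). g a)"
  using sum.nat_diff_reindex[of g "Suc m"] by (simp add: lessThan_Suc_atMost)

lemma flip2: "(\<Sum>a\<le>m. \<Sum>b\<le>n. F a b) = (\<Sum>a\<le>(m::nat). \<Sum>b\<le>(n::nat). F (m - a) (n - b))"
proof -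
  have "(\<Sum>a\<le>m. \<Sum>b\<le>n. F a b) = (\<Sum>a\<le>m. \<Sum>b\<le>n. F (m - a) b)"
    using flip1[of "\<lambda>a. \<Sum>b\<le>n. F a b" m] by simp
  also have "\<dots> = (\<Sum>a\<le>m. \<Sum>b\<le>n. F (m - a) (n - b))"
    by (rule sum.cong[OF refl], rule flip1[symmetric])
  finally show ?thesis .
qed

lemma Bf_sym: "Bf m n x y = Bf m n y x"
proof -
  have "Bf m n x y = (\<Sum>a\<le>m. \<Sum>b\<le>n. x (m - a) (n - b) * y (m - (m - a)) (n - (n - b)))"
    unfolding Bf_def by (rule flip2)
  also have "\<dots> = Bf m n y x"
    unfolding Bf_def by (intro sum.cong refl) (simp add: mult.commute)
  finally show ?thesis .
qed

lemma shift1: "(\<Sum>a\<le>(m::nat). (if 1 \<le> a then g (a - 1) else 0) * h (m - a)) =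
   (\<Sum>a\<le>m. g a * (if 1 \<le> m - a then h (m - a - 1) else (0::complex)))"
proof (cases m)
  case 0 then show ?thesis by simp
next
  case (Suc m')
  have "(\<Sum>a\<le>m. (if 1 \<le> a then g (a - 1) else 0) * h (m - a)) = (\<Sum>a\<le>m'. g a * h (m' - a))"
    unfolding Suc sum.atMost_Suc_shift by simp
  also have "\<dots> = (\<Sum>a\<le>m. g a * (if 1 \<le> m - a then h (m - a - 1) else 0))"
    unfolding Suc sum.atMost_Suc by (auto intro!: sum.cong simp: Suc_diff_le)
  finally show ?thesis .
qed

lemma shift2: "(\<Sum>a\<le>m. (of_nat a + 1) * (of_nat m - of_nat a) * g (a + 1) * h (m - a)) =
   (\<Sum>a\<le>m. g a * ((of_nat (m - a) + 1) * (of_nat m - of_nat (m - a)) * h (m - a + 1)) :: complex)"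
proof (cases m)
  case 0 then show ?thesis by simp
next
  case (Suc m')
  have "(\<Sum>a\<le>m. (of_nat a + 1) * (of_nat m - of_nat a) * g (a + 1) * h (m - a)) =
      (\<Sum>a\<le>m'. (of_nat a + 1) * (of_nat m - of_nat a) * g (a + 1) * h (m - a))"
    unfolding Suc sum.atMost_Suc by simp
  also have "\<dots> = (\<Sum>a\<le>m'. g (Suc a) * ((of_nat (m - Suc a) + 1) * (of_nat m - of_nat (m - Suc a)) * h (m - Suc a + 1)))"
    by (intro sum.cong refl) (auto simp: Suc of_nat_diff Suc_diff_le algebra_simps)
  also have "\<dots> = (\<Sum>a\<le>m. g a * ((of_nat (m - a) + 1) * (of_nat m - of_nat (m - a)) * h (m - a + 1)))"
    unfolding Suc sum.atMost_Suc_shift by simp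
  finally show ?thesis .
qed


lemma Bf_f: "Bf m n (f_act m n x) y = Bf m n x (f_act m n y)"
proof -
  have L: "Bf m n (f_act m n x) y = (\<Sum>a\<le>m. \<Sum>b\<le>n. (if 1 \<le> a then x (a-1) b else 0) * y (m-a) (n-b))
        + (\<Sum>a\<le>m. \<Sum>b\<le>n. (if 1 \<le> b then x a (b-1) else 0) * y (m-a) (n-b))"
    unfolding Bf_def sum.distrib[symmetric] by (intro sum.cong refl) (simp add: f_act_in algebra_simps)
  have R: "Bf m n x (f_act m n y) = (\<Sum>a\<le>m. \<Sum>b\<le>n. x a b * (if 1 \<le> m-a then y (m-a-1) (n-b) else 0))
        + (\<Sum>a\<le>m. \<Sum>b\<le>n. x a b * (if 1 \<le> n-b then y (m-a) (n-b-1) else 0))"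
    unfolding Bf_def sum.distrib[symmetric] by (intro sum.cong refl) (simp add: f_act_in algebra_simps)
  have 1: "(\<Sum>a\<le>m. \<Sum>b\<le>n. (if 1 \<le> a then x (a-1) b else 0) * y (m-a) (n-b))
        = (\<Sum>a\<le>m. \<Sum>b\<le>n. x a b * (if 1 \<le> m-a then y (m-a-1) (n-b) else 0))"
  proof -
    have "(\<Sum>a\<le>m. \<Sum>b\<le>n. (if 1 \<le> a then x (a-1) b else 0) * y (m-a) (n-b))
        = (\<Sum>b\<le>n. \<Sum>a\<le>m. (if 1 \<le> a then x (a-1) b else 0) * y (m-a) (n-b))"
      by (rule sum.swap)
    also have "\<dots> = (\<Sum>b\<le>n. \<Sum>a\<le>m. x a b * (if 1 \<le> m-a then y (m-a-1) (n-b) else 0))"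
    proof (rule sum.cong[OF refl])
      fix b show "(\<Sum>a\<le>m. (if 1 \<le> a then x (a-1) b else 0) * y (m-a) (n-b)) = (\<Sum>a\<le>m. x a b * (if 1 \<le> m-a then y (m-a-1) (n-b) else 0))"
        using shift1[where g="\<lambda>a. x a b" and h = "\<lambda>a. y a (n - b)" and m=m] by simp
    qed
    also have "\<dots> = (\<Sum>a\<le>m. \<Sum>b\<le>n. x a b * (if 1 \<le> m-a then y (m-a-1) (n-b) else 0))"
      by (rule sum.swap)
    finally show ?thesis .
  qed
  have 2: "(\<Sum>a\<le>m. \<Sum>b\<le>n. (if 1 \<le> b then x a (b-1) else 0) * y (m-a) (n-b))
        = (\<Sum>a\<le>m. \<Sum>b\<le>n. x a b * (if 1 \<le> n-b then y (m-a) (n-b-1) else 0))"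
  proof (rule sum.cong[OF refl])
    fix a show "(\<Sum>b\<le>n. (if 1 \<le> b then x a (b-1) else 0) * y (m-a) (n-b)) = (\<Sum>b\<le>n. x a b * (if 1 \<le> n-b then y (m-a) (n-b-1) else 0))"
      using shift1[where g="\<lambda>b. x a b" and h = "\<lambda>b. y (m - a) b" and m=n] by simp
  qed
  show ?thesis unfolding L R 1 2 ..
qed

lemma Bf_e: "Bf m n (e_act m n x) y = Bf m n x (e_act m n y)"
proof -
  have L: "Bf m n (e_act m n x) y = (\<Sum>a\<le>m. \<Sum>b\<le>n. (of_nat a + 1) * (of_nat m - of_nat a) * x (a + 1) b * y (m-a) (n-b))
        + (\<Sum>a\<le>m. \<Sum>b\<le>n. (of_nat b + 1) * (of_nat n - of_nat b) * x a (b + 1) * y (m-a) (n-b))"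
    unfolding Bf_def sum.distrib[symmetric] by (intro sum.cong refl) (simp add: e_act_in algebra_simps)
  have R: "Bf m n x (e_act m n y) = (\<Sum>a\<le>m. \<Sum>b\<le>n. x a b * ((of_nat (m - a) + 1) * (of_nat m - of_nat (m - a)) * y (m - a + 1) (n-b)))
        + (\<Sum>a\<le>m. \<Sum>b\<le>n. x a b * ((of_nat (n - b) + 1) * (of_nat n - of_nat (n - b)) * y (m - a) (n - b + 1)))"
    unfolding Bf_def sum.distrib[symmetric] by (intro sum.cong refl) (simp add: e_act_in algebra_simps)
  have 1: "(\<Sum>a\<le>m. \<Sum>b\<le>n. (of_nat a + 1) * (of_nat m - of_nat a) * x (a + 1) b * y (m-a) (n-b))
      = (\<Sum>a\<le>m. \<Sum>b\<le>n. x a b * ((of_nat (m - a) + 1) * (of_nat m - of_nat (m - a)) * y (m - a + 1) (n-b)))"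
  proof -
    have "(\<Sum>a\<le>m. \<Sum>b\<le>n. (of_nat a + 1) * (of_nat m - of_nat a) * x (a + 1) b * y (m-a) (n-b))
        = (\<Sum>b\<le>n. \<Sum>a\<le>m. (of_nat a + 1) * (of_nat m - of_nat a) * x (a + 1) b * y (m-a) (n-b))"
      by (rule sum.swap)
    also have "\<dots> = (\<Sum>b\<le>n. \<Sum>a\<le>m. x a b * ((of_nat (m - a) + 1) * (of_nat m - of_nat (m - a)) * y (m - a + 1) (n-b)))"
    proof (rule sum.cong[OF refl])
      fix b show "(\<Sum>a\<le>m. (of_nat a + 1) * (of_nat m - of_nat a) * x (a + 1) b * y (m-a) (n-b)) = (\<Sum>a\<le>m. x a b * ((of_nat (m - a) + 1) * (of_nat m - of_nat (m - a)) * y (m - a + 1) (n-b)))"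
        using shift2[where g="\<lambda>a. x a b" and h = "\<lambda>a. y a (n - b)" and m=m] by simp
    qed
    also have "\<dots> = (\<Sum>a\<le>m. \<Sum>b\<le>n. x a b * ((of_nat (m - a) + 1) * (of_nat m - of_nat (m - a)) * y (m - a + 1) (n-b)))"
      by (rule sum.swap)
    finally show ?thesis .
  qed
  have 2: "(\<Sum>a\<le>m. \<Sum>b\<le>n. (of_nat b + 1) * (of_nat n - of_nat b) * x a (b + 1) * y (m-a) (n-b))
      = (\<Sum>a\<le>m. \<Sum>b\<le>n. x a b * ((of_nat (n - b) + 1) * (of_nat n - of_nat (n - b)) * y (m - a) (n - b + 1)))"
  proof (rule sum.cong[OF refl])
    fix a show "(\<Sum>b\<le>n. (of_nat b + 1) * (of_nat n - of_nat b) * x a (b + 1) * y (m-a) (n-b)) = (\<Sum>b\<le>n. x a b * ((of_nat (n - b) + 1) * (of_nat n - of_nat (n - b)) * y (m - a) (n - b + 1)))"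
      using shift2[where g="\<lambda>b. x a b" and h = "\<lambda>b. y (m - a) b" and m=n] by simp
  qed
  show ?thesis unfolding L R 1 2 ..
qed

lemma Bf_pow: "Bf m n (f_pow m n s x) y = Bf m n x (f_pow m n s y)"
proof (induction s arbitrary: y)
  case 0 then show ?case by simp
next
  case (Suc s)
  have "Bf m n (f_pow m n (Suc s) x) y = Bf m n (f_pow m n s x) (f_act m n y)"
    by (simp add: f_pow_Suc Bf_f)
  also have "\<dots> = Bf m n x (f_pow m n s (f_act m n y))" by (rule Suc.IH)
  finally show ?case by (simp add: f_pow_Suc')
qed

lemma Bf_scale_right: "Bf m n x (\<lambda>a b. c * y a b) = c * Bf m n x y"
  unfolding Bf_def by (simp add: sum_distrib_left ac_simps)

lemma Bf_zero_left: "Bf m n (\<lambda>a b. 0) y = 0"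
  unfolding Bf_def by simp

lemma Bf_sum_left: "Bf m n (\<lambda>a b. \<Sum>k\<in>K. c k * g k a b) y = (\<Sum>k\<in>K. c k * Bf m n (g k) y)"
proof -
  have "Bf m n (\<lambda>a b. \<Sum>k\<in>K. c k * g k a b) y = (\<Sum>a\<le>m. \<Sum>b\<le>n. \<Sum>k\<in>K. c k * (g k a b * y (m - a) (n - b)))"
    unfolding Bf_def by (simp add: sum_distrib_right sum_distrib_left ac_simps)
  also have "\<dots> = (\<Sum>a\<le>m. \<Sum>k\<in>K. \<Sum>b\<le>n. c k * (g k a b * y (m - a) (n - b)))"
    by (rule sum.cong[OF refl], rule sum.swap)
  also have "\<dots> = (\<Sum>k\<in>K. \<Sum>a\<le>m. \<Sum>b\<le>n. c k * (g k a b * y (m - a) (n - b)))"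
    by (rule sum.swap)
  also have "\<dots> = (\<Sum>k\<in>K. c k * Bf m n (g k) y)"
    unfolding Bf_def by (simp add: sum_distrib_left)
  finally show ?thesis .
qed

lemma ortho_off:
  assumes "k' < k" "k \<le> min m n"
  shows "Bf m n (phi m n k) (f_pow m n (m + n - k - k') (phi m n k')) = 0"
proof -
  define N where "N = m + n - k - k'"
  have k': "k' \<le> min m n" using assms by simp
  define c :: complex where "c = of_nat (Suc N) * (of_nat (m + n) - of_nat (2 * k' + N))"
  have "(of_nat (m + n) :: complex) \<noteq> of_nat (2 * k' + N)"
    unfolding of_nat_eq_iff N_def using assms by auto
  then have c0: "c \<noteq> 0" unfolding c_def by (simp del: of_nat_Suc)
  have sl: "e_act m n (f_pow m n (Suc N) (phi m n k')) = (\<lambda>a b. c * f_pow m n N (phi m n k') a b)"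
    unfolding c_def by (rule sl2[OF boxed_phi[OF k'] adiag_phi[OF k'] e_phi[OF k']])
  have "f_pow m n N (phi m n k') = (\<lambda>a b. inverse c * e_act m n (f_pow m n (Suc N) (phi m n k')) a b)"
    unfolding sl using c0 by (simp add: fun_eq_iff)
  then have "Bf m n (phi m n k) (f_pow m n N (phi m n k')) = inverse c * Bf m n (e_act m n (phi m n k)) (f_pow m n (Suc N) (phi m n k'))"
    by (simp add: Bf_scale_right Bf_e)
  also have "\<dots> = 0" using e_phi[OF assms(2)] by (simp add: Bf_zero_left)
  finally show ?thesis unfolding N_def .
qed


lemma upper_vdm: "(\<Sum>j\<le>k. ((a + j) choose j) * ((b + (k - j)) choose (k - j))) = (a + b + k + 1) choose k"
proof (induction b arbitrary: k)
  case 0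
  have "(\<Sum>j\<le>k. ((a + j) choose j) * ((0 + (k - j)) choose (k - j))) = (\<Sum>j\<le>k. (a + j) choose j)"
    by simp
  also have "\<dots> = (a + 0 + k + 1) choose k" using sum_choose_lower[of a k] by simp
  finally show ?case .
next
  case (Suc b)
  note outer = Suc.IH
  show ?case
  proof (induction k)
    case 0 then show ?case by simp
  next
    case (Suc k)
    have split: "((Suc b + (Suc k - j)) choose (Suc k - j)) = ((b + (Suc k - j)) choose (Suc k - j)) + ((Suc b + (k - j)) choose (k - j))"
      if "j \<le> k" for j
    proof -
      have "Suc k - j = Suc (k - j)" using that by simp
      then show ?thesis by simp
    qed
    define F where "F j = (a + j) choose j" for j
    have L0: "(\<Sum>j\<le>Suc k. F j * ((Suc b + (Suc k - j)) choose (Suc k - j)))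
       = (\<Sum>j\<le>k. F j * ((Suc b + (Suc k - j)) choose (Suc k - j))) + F (Suc k)"
      by simp
    have L1: "(\<Sum>j\<le>k. F j * ((Suc b + (Suc k - j)) choose (Suc k - j)))
       = (\<Sum>j\<le>k. F j * ((b + (Suc k - j)) choose (Suc k - j))) + (\<Sum>j\<le>k. F j * ((Suc b + (k - j)) choose (k - j)))"
    proof -
      have "(\<Sum>j\<le>k. F j * ((Suc b + (Suc k - j)) choose (Suc k - j)))
         = (\<Sum>j\<le>k. F j * ((b + (Suc k - j)) choose (Suc k - j)) + F j * ((Suc b + (k - j)) choose (k - j)))"
      proof (rule sum.cong[OF refl])
        fix j assume "j \<in> {..k}"
        then have "j \<le> k" by simp
        show "F j * ((Suc b + (Suc k - j)) choose (Suc k - j)) = F j * ((b + (Suc k - j)) choose (Suc k - j)) + F j * ((Suc b + (k - j)) choose (k - j))"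
          unfolding split[OF \<open>j \<le> k\<close>] by (simp only: add_mult_distrib2)
      qed
      then show ?thesis by (simp only: sum.distrib)
    qed
    have L2: "(\<Sum>j\<le>k. F j * ((Suc b + (k - j)) choose (k - j))) = (a + Suc b + k + 1) choose k"
      unfolding F_def by (rule Suc.IH)
    have L3: "(\<Sum>j\<le>k. F j * ((b + (Suc k - j)) choose (Suc k - j))) + F (Suc k)
        = (a + b + Suc k + 1) choose Suc k"
    proof -
      have "(\<Sum>j\<le>k. F j * ((b + (Suc k - j)) choose (Suc k - j))) + F (Suc k)
          = (\<Sum>j\<le>Suc k. F j * ((b + (Suc k - j)) choose (Suc k - j)))" by simp
      also have "\<dots> = (a + b + Suc k + 1) choose Suc k" unfolding F_def by (rule outer)
      finally show ?thesis .
    qed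
    have "(\<Sum>j\<le>Suc k. F j * ((Suc b + (Suc k - j)) choose (Suc k - j)))
        = ((a + b + Suc k + 1) choose Suc k) + ((a + Suc b + k + 1) choose k)"
      using L0 L1 L2 L3 by simp
    also have "\<dots> = (a + Suc b + Suc k + 1) choose Suc k" by simp
    finally show ?case unfolding F_def .
  qed
qed

lemma alt_sum_int: "(\<Sum>l\<le>k. (-1::int) ^ l * of_nat (k choose l) * of_nat ((N + l) choose r))
   = (-1) ^ k * (if k \<le> r then of_nat (N choose (r - k)) else 0)"
proof (induction k arbitrary: N r)
  case 0 then show ?case by simp
next
  case (Suc k)
  have A: "(\<Sum>l\<le>Suc k. (-1::int) ^ l * of_nat (Suc k choose l) * of_nat ((N + l) choose r))
     = (\<Sum>l\<le>Suc k. (-1::int) ^ l * of_nat (k choose l) * of_nat ((N + l) choose r))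
     + (\<Sum>l\<le>Suc k. (-1::int) ^ l * (if l = 0 then 0 else of_nat (k choose (l - 1))) * of_nat ((N + l) choose r))"
  proof -
    have P: "int (Suc k choose l) = int (k choose l) + (if l = 0 then 0 else int (k choose (l - 1)))" for l
      by (cases l) auto
    show ?thesis by (unfold P; simp only: ring_distribs sum.distrib)
  qed
  have B: "(\<Sum>l\<le>Suc k. (-1::int) ^ l * of_nat (k choose l) * of_nat ((N + l) choose r))
       = (\<Sum>l\<le>k. (-1::int) ^ l * of_nat (k choose l) * of_nat ((N + l) choose r))"
    by simp
  have C: "(\<Sum>l\<le>Suc k. (-1::int) ^ l * (if l = 0 then 0 else of_nat (k choose (l - 1))) * of_nat ((N + l) choose r))
       = - (\<Sum>l\<le>k. (-1::int) ^ l * of_nat (k choose l) * of_nat ((Suc N + l) choose r))"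
    unfolding sum.atMost_Suc_shift by (simp add: sum_negf[symmetric])
  have "(\<Sum>l\<le>Suc k. (-1::int) ^ l * of_nat (Suc k choose l) * of_nat ((N + l) choose r))
     = (-1) ^ k * ((if k \<le> r then of_nat (N choose (r - k)) else 0) - (if k \<le> r then of_nat (Suc N choose (r - k)) else 0))"
    unfolding A B C Suc.IH by (simp add: algebra_simps)
  also have "\<dots> = (-1) ^ Suc k * (if Suc k \<le> r then of_nat (N choose (r - Suc k)) else 0)"
  proof (cases "k \<le> r")
    case True
    show ?thesis
    proof (cases "k = r")
      case True then show ?thesis by simp
    next
      case False
      then have "r - k = Suc (r - Suc k)" using \<open>k \<le> r\<close> by simp
      then show ?thesis using \<open>k \<le> r\<close> False by simp
    qed
  next
    case False then show ?thesis by simp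
  qed
  finally show ?case .
qed

lemma alt_sum: "(\<Sum>l\<le>k. (-1::int) ^ l * of_nat (k choose l) * of_nat ((N + l) choose k)) = (-1) ^ k"
  using alt_sum_int[of k N k] by simp

lemma conv: assumes "l \<le> k" "k \<le> m" "k \<le> n"
  shows "((m - l) choose (k - l)) * ((n - k + l) choose l) * ((m + n - 2 * k) choose (m - l))
       = ((m + n - 2 * k) choose (m - k)) * (k choose l) * ((n - k + l) choose k)"
proof (cases "m - l \<le> m + n - 2 * k")
  case True
  have p1: "m - k \<le> m - l" using assms by arith
  have e1: "m + n - 2 * k - (m - k) = n - k" using assms by arith
  have e2: "m - l - (m - k) = k - l" using assms by arith
  have 1: "((m + n - 2 * k) choose (m - l)) * ((m - l) choose (m - k)) = ((m + n - 2 * k) choose (m - k)) * ((n - k) choose (k - l))"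
    using choose_mult[OF p1 True, unfolded e1 e2] .
  have p3: "k - l \<le> m - l" using assms by arith
  have e3: "m - l - (k - l) = m - k" using assms by arith
  have 2: "((m - l) choose (m - k)) = ((m - l) choose (k - l))"
    using binomial_symmetric[OF p3, unfolded e3] by simp
  have p4: "k \<le> n - k + l" using True assms by arith
  have e4: "n - k + l - l = n - k" by arith
  have 3: "((n - k + l) choose k) * (k choose l) = ((n - k + l) choose l) * ((n - k) choose (k - l))"
    using choose_mult[OF assms(1) p4, unfolded e4] .
  define X1 where "X1 = (m - l) choose (k - l)"
  define Y where "Y = (n - k + l) choose l"
  define Z where "Z = (m + n - 2 * k) choose (m - l)"
  define W where "W = (m + n - 2 * k) choose (m - k)"
  define K where "K = k choose l"
  define P where "P = (n - k + l) choose k"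
  define Q where "Q = (n - k) choose (k - l)"
  have h1: "Z * X1 = W * Q" using 1 2 unfolding Z_def X1_def W_def Q_def by simp
  have h3: "P * K = Y * Q" using 3 unfolding P_def K_def Y_def Q_def .
  have "X1 * Y * Z = (Z * X1) * Y" by (simp only: mult_ac)
  also have "\<dots> = W * (Y * Q)" unfolding h1 by (simp only: mult_ac)
  also have "\<dots> = W * K * P" unfolding h3[symmetric] by (simp only: mult_ac)
  finally show ?thesis unfolding X1_def Y_def Z_def W_def K_def P_def .
next
  case False
  then have "((m + n - 2 * k) choose (m - l)) = 0" by simp
  moreover have "((n - k + l) choose k) = 0" using False assms by simp
  ultimately show ?thesis by (metis mult_0_right)
qed


lemma basis_pow: assumes "a0 \<le> m" "b0 \<le> n"
  shows "f_pow m n s (basis_vec m n a0 b0) a b =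
    (if a0 \<le> a \<and> a \<le> m \<and> b0 \<le> b \<and> b \<le> n \<and> (a - a0) + (b - b0) = s then of_nat (s choose (a - a0)) else 0)"
proof (induction s arbitrary: a b)
  case 0 show ?case using assms by (auto simp: basis_vec_def)
next
  case (Suc s)
  show ?case
  proof (cases "a \<le> m \<and> b \<le> n")
    case False then show ?thesis by (auto simp: f_pow_Suc f_act_def)
  next
    case True
    have E: "f_pow m n (Suc s) (basis_vec m n a0 b0) a b = (if 1 \<le> a then f_pow m n s (basis_vec m n a0 b0) (a - 1) b else 0)
       + (if 1 \<le> b then f_pow m n s (basis_vec m n a0 b0) a (b - 1) else 0)"
      using True by (simp add: f_pow_Suc f_act_in)
    show ?thesis
    proof (cases "a0 \<le> a \<and> b0 \<le> b \<and> (a - a0) + (b - b0) = Suc s")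
      case False
      have t1: "(if 1 \<le> a then f_pow m n s (basis_vec m n a0 b0) (a - 1) b else 0) = 0"
      proof (cases "1 \<le> a")
        case True
        have c1: "\<not> (a0 \<le> a - 1 \<and> a - 1 \<le> m \<and> b0 \<le> b \<and> b \<le> n \<and> a - 1 - a0 + (b - b0) = s)"
          using False True by arith
        show ?thesis by (simp only: Suc.IH if_not_P[OF c1] if_cancel)
      qed simp
      have t2: "(if 1 \<le> b then f_pow m n s (basis_vec m n a0 b0) a (b - 1) else 0) = 0"
      proof (cases "1 \<le> b")
        case True
        have c2: "\<not> (a0 \<le> a \<and> a \<le> m \<and> b0 \<le> b - 1 \<and> b - 1 \<le> n \<and> a - a0 + (b - 1 - b0) = s)"
          using False True by arith
        show ?thesis by (simp only: Suc.IH if_not_P[OF c2] if_cancel)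
      qed simp
      have c: "\<not> (a0 \<le> a \<and> a \<le> m \<and> b0 \<le> b \<and> b \<le> n \<and> (a - a0) + (b - b0) = Suc s)" using False by auto
      show ?thesis unfolding E t1 t2 if_not_P[OF c] by simp
    next
      case T: True
      show ?thesis
      proof (cases "a = a0")
        case True
        then have "1 \<le> b" "b - 1 - b0 = s" using T by auto
        then show ?thesis unfolding E Suc.IH using T True \<open>a \<le> m \<and> b \<le> n\<close> by auto
      next
        case False
        then have a1: "1 \<le> a" "a0 \<le> a - 1" using T by auto
        show ?thesis
        proof (cases "b = b0")
          case True
          then have "a - 1 - a0 = s" "a - a0 = Suc s" using T a1 by auto
          then show ?thesis unfolding E Suc.IH using T True a1 \<open>a \<le> m \<and> b \<le> n\<close> by auto
        next
          case False
          then have b1: "1 \<le> b" "b0 \<le> b - 1" using T by auto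
          have s1: "a - 1 - a0 + (b - b0) = s" "a - a0 + (b - 1 - b0) = s" using T a1 b1 by auto
          have p: "a - a0 = Suc (a - 1 - a0)" using a1 by auto
          have "f_pow m n (Suc s) (basis_vec m n a0 b0) a b = of_nat (s choose (a - 1 - a0)) + of_nat (s choose (a - a0))"
            unfolding E Suc.IH using T a1 b1 s1 \<open>a \<le> m \<and> b \<le> n\<close> by auto
          also have "\<dots> = of_nat (Suc s choose (a - a0))" unfolding p by simp
          finally show ?thesis using T \<open>a \<le> m \<and> b \<le> n\<close> by simp
        qed
      qed
    qed
  qed
qed

lemma Bf_phi_left: assumes "k \<le> min m n"
  shows "Bf m n (phi m n k) y = (\<Sum>l\<le>k. coef m n k l * y (m - l) (n - (k - l)))"
proof -
  have inner: "(\<Sum>b\<le>n. phi m n k a b * y (m - a) (n - b)) = (if a \<le> k then coef m n k a * y (m - a) (n - (k - a)) else 0)" for a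
  proof -
    have "(\<Sum>b\<le>n. phi m n k a b * y (m - a) (n - b)) = (\<Sum>b\<le>n. if b = k - a then (if a \<le> k then coef m n k a * y (m - a) (n - (k - a)) else 0) else 0)"
      by (rule sum.cong[OF refl]) (auto simp: phi_explicit[OF assms])
    also have "\<dots> = (if a \<le> k then coef m n k a * y (m - a) (n - (k - a)) else 0)"
      using assms by (auto simp: sum.delta')
    finally show ?thesis .
  qed
  have "Bf m n (phi m n k) y = (\<Sum>a\<le>m. if a \<in> {..k} then coef m n k a * y (m - a) (n - (k - a)) else 0)"
    unfolding Bf_def inner by simp
  also have "\<dots> = (\<Sum>a\<in>{..m} \<inter> {..k}. coef m n k a * y (m - a) (n - (k - a)))"
    by (rule sum.inter_restrict[symmetric]) simp
  also have "{..m} \<inter> {..k} = {..k}" using assms by auto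
  finally show ?thesis .
qed

lemma Bf_basis_left: assumes "a0 \<le> m" "b0 \<le> n"
  shows "Bf m n (basis_vec m n a0 b0) y = y (m - a0) (n - b0)"
proof -
  have inner: "(\<Sum>b\<le>n. basis_vec m n a0 b0 a b * y (m - a) (n - b)) = (if a = a0 then y (m - a0) (n - b0) else 0)" for a
  proof -
    have "(\<Sum>b\<le>n. basis_vec m n a0 b0 a b * y (m - a) (n - b)) = (\<Sum>b\<le>n. if b = b0 then (if a = a0 then y (m - a0) (n - b0) else 0) else 0)"
      by (rule sum.cong[OF refl]) (use assms in \<open>auto simp: basis_vec_def\<close>)
    then show ?thesis using assms by simp
  qed
  show ?thesis unfolding Bf_def inner using assms by simp
qed


lemma lowest: assumes "k \<le> min m n"
  shows "f_act m n (f_pow m n (m + n - 2 * k) (phi m n k)) = (\<lambda>a b. 0)"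
proof -
  let ?L = "m + n - 2 * k"
  let ?w = "f_pow m n (Suc ?L) (phi m n k)"
  have sl: "e_act m n ?w = (\<lambda>a b. of_nat (Suc ?L) * (of_nat (m + n) - of_nat (2 * k + ?L)) * f_pow m n ?L (phi m n k) a b)"
    by (rule sl2[OF boxed_phi[OF assms] adiag_phi[OF assms] e_phi[OF assms]])
  have eq: "2 * k + ?L = m + n" using assms by simp
  from sl have "e_act m n ?w = (\<lambda>a b. of_nat (Suc ?L) * (of_nat (m + n) - of_nat (m + n)) * f_pow m n ?L (phi m n k) a b)"
    by (simp only: eq)
  then have e0: "e_act m n ?w = (\<lambda>a b. 0)" by (simp only: diff_self mult_zero_right mult_zero_left)
  have "?w = (\<lambda>a b. 0)"
    by (rule vanish[OF boxed_f_pow[OF boxed_phi[OF assms]] adiag_f_pow[OF adiag_phi[OF assms]] e0]) (use assms in arith)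
  then show ?thesis by (simp add: f_pow_Suc)
qed

lemma psi_alt: assumes "k \<le> min m n" "l \<le> k"
  shows "f_pow m n (m + n - 2 * k) (phi m n k) (m - l) (n - (k - l)) = (-1) ^ l * f_pow m n (m + n - 2 * k) (phi m n k) m (n - k)"
  using assms(2)
proof (induction l)
  case 0 then show ?case by simp
next
  case (Suc l)
  let ?psi = "f_pow m n (m + n - 2 * k) (phi m n k)"
  have l: "l < k" using Suc.prems by simp
  have A: "f_act m n ?psi (m - l) (n - (k - Suc l)) = 0" using lowest[OF assms(1)] by simp
  have B: "f_act m n ?psi (m - l) (n - (k - Suc l)) = ?psi (m - Suc l) (n - (k - Suc l)) + ?psi (m - l) (n - (k - l))"
  proof -
    have e: "m - l - 1 = m - Suc l" "n - (k - Suc l) - 1 = n - (k - l)" and i: "1 \<le> m - l" "1 \<le> n - (k - Suc l)"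
      and b: "m - l \<le> m" "n - (k - Suc l) \<le> n"
      using l assms(1) by auto
    show ?thesis unfolding f_act_in[OF b] e[symmetric] using i by (simp only: if_True)
  qed
  have "?psi (m - Suc l) (n - (k - Suc l)) + ?psi (m - l) (n - (k - l)) = 0"
    by (simp only: B[symmetric] A)
  then have "?psi (m - Suc l) (n - (k - Suc l)) = - ?psi (m - l) (n - (k - l))"
    by (simp only: eq_neg_iff_add_eq_0)
  then show ?case using Suc.IH l by simp
qed


lemma psi_corner: assumes "k \<le> min m n"
  shows "f_pow m n (m + n - 2 * k) (phi m n k) m (n - k) = (-1) ^ k * of_nat ((m + n - 2 * k) choose (m - k))"
proof -
  let ?L = "m + n - 2 * k"
  have kn: "k \<le> n" using assms by simp
  have "f_pow m n ?L (phi m n k) m (n - k) = Bf m n (basis_vec m n 0 k) (f_pow m n ?L (phi m n k))"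
    using Bf_basis_left[of 0 m k n] kn by simp
  also have "\<dots> = Bf m n (f_pow m n ?L (basis_vec m n 0 k)) (phi m n k)"
    by (rule Bf_pow[symmetric])
  also have "\<dots> = Bf m n (phi m n k) (f_pow m n ?L (basis_vec m n 0 k))"
    by (rule Bf_sym)
  also have "\<dots> = (\<Sum>l\<le>k. coef m n k l * f_pow m n ?L (basis_vec m n 0 k) (m - l) (n - (k - l)))"
    by (rule Bf_phi_left[OF assms])
  also have "\<dots> = (\<Sum>l\<le>k. coef m n k l * of_nat (?L choose (m - l)))"
  proof (rule sum.cong[OF refl])
    fix l assume "l \<in> {..k}"
    then have l: "l \<le> k" by simp
    show "coef m n k l * f_pow m n ?L (basis_vec m n 0 k) (m - l) (n - (k - l)) = coef m n k l * of_nat (?L choose (m - l))"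
    proof (cases "k \<le> n - (k - l)")
      case True
      have c: "0 \<le> m - l \<and> m - l \<le> m \<and> k \<le> n - (k - l) \<and> n - (k - l) \<le> n \<and> m - l - 0 + (n - (k - l) - k) = ?L"
        using True l assms by arith
      show ?thesis unfolding basis_pow[OF le0 kn] if_P[OF c] by (simp only: diff_zero)
    next
      case False
      have c: "\<not> (0 \<le> m - l \<and> m - l \<le> m \<and> k \<le> n - (k - l) \<and> n - (k - l) \<le> n \<and> m - l - 0 + (n - (k - l) - k) = ?L)"
        using False by blast
      have "?L < m - l" using False l assms by arith
      then have z: "?L choose (m - l) = 0" by (rule binomial_eq_0)
      show ?thesis unfolding basis_pow[OF le0 kn] if_not_P[OF c] z by simp
    qed
  qed
  also have "\<dots> = (\<Sum>l\<le>k. of_int ((-1) ^ l * of_nat (k choose l) * of_nat ((n - k + l) choose k)) * of_nat (?L choose (m - k)))"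
  proof (rule sum.cong[OF refl])
    fix l assume "l \<in> {..k}"
    then have l: "l \<le> k" by simp
    have c: "of_nat (((m - l) choose (k - l)) * ((n - k + l) choose l) * (?L choose (m - l)))
       = (of_nat ((?L choose (m - k)) * (k choose l) * ((n - k + l) choose k)) :: complex)"
      using conv[OF l] assms by simp
    show "coef m n k l * of_nat (?L choose (m - l)) = of_int ((-1) ^ l * of_nat (k choose l) * of_nat ((n - k + l) choose k)) * of_nat (?L choose (m - k))"
      using c unfolding coef_def by (simp add: algebra_simps)
  qed
  also have "\<dots> = of_int (\<Sum>l\<le>k. (-1) ^ l * of_nat (k choose l) * of_nat ((n - k + l) choose k)) * of_nat (?L choose (m - k))"
    by (simp add: sum_distrib_right)
  also have "\<dots> = (-1) ^ k * of_nat (?L choose (m - k))"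
    unfolding alt_sum by simp
  finally show ?thesis .
qed

lemma norm: assumes "k \<le> min m n"
  shows "Bf m n (phi m n k) (f_pow m n (m + n - 2 * k) (phi m n k)) = (-1) ^ k * of_nat (Dnorm m n k)"
proof -
  let ?L = "m + n - 2 * k"
  let ?psi = "f_pow m n ?L (phi m n k)"
  have "Bf m n (phi m n k) ?psi = (\<Sum>l\<le>k. coef m n k l * ?psi (m - l) (n - (k - l)))"
    by (rule Bf_phi_left[OF assms])
  also have "\<dots> = (\<Sum>l\<le>k. of_nat (((m - l) choose (k - l)) * ((n - k + l) choose l)) * ?psi m (n - k))"
  proof (rule sum.cong[OF refl])
    fix l assume "l \<in> {..k}"
    then have l: "l \<le> k" by simp
    have sq: "((-1::complex) ^ l) * (-1) ^ l = 1" by (simp add: power_mult_distrib[symmetric])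
    show "coef m n k l * ?psi (m - l) (n - (k - l)) = of_nat (((m - l) choose (k - l)) * ((n - k + l) choose l)) * ?psi m (n - k)"
      unfolding psi_alt[OF assms l] coef_def
      by (simp add: algebra_simps)
  qed
  also have "\<dots> = of_nat (\<Sum>l\<le>k. ((m - l) choose (k - l)) * ((n - k + l) choose l)) * ?psi m (n - k)"
    by (simp add: sum_distrib_right)
  also have "(\<Sum>l\<le>k. ((m - l) choose (k - l)) * ((n - k + l) choose l)) = (m + n - k + 1) choose k"
  proof -
    have "(\<Sum>l\<le>k. ((m - l) choose (k - l)) * ((n - k + l) choose l)) = (\<Sum>j\<le>k. (((n - k) + j) choose j) * (((m - k) + (k - j)) choose (k - j)))"
      by (rule sum.cong[OF refl]) (use assms in auto)
    also have "\<dots> = ((n - k) + (m - k) + k + 1) choose k" by (rule upper_vdm)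
    also have "(n - k) + (m - k) + k + 1 = m + n - k + 1" using assms by simp
    finally show ?thesis .
  qed
  finally show ?thesis unfolding psi_corner[OF assms] Dnorm_def by (simp add: algebra_simps)
qed


lemma Dnorm_pos: assumes "k \<le> min m n" shows "Dnorm m n k > 0"
proof -
  have "k \<le> m + n - k + 1" "m - k \<le> m + n - 2 * k" using assms by arith+
  then show ?thesis unfolding Dnorm_def by simp
qed

lemma sign_sq: "((-1::complex) ^ k) * (-1) ^ k = 1"
  by (simp add: power_mult_distrib[symmetric])

lemma ortho: assumes "r \<le> min m n" "r' \<le> min m n" "s + s' + r + r' = m + n"
  shows "Bf m n (f_pow m n s (phi m n r)) (f_pow m n s' (phi m n r'))
     = (if r = r' then (-1) ^ r * of_nat (Dnorm m n r) else 0)"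
proof -
  have e: "Bf m n (f_pow m n s (phi m n r)) (f_pow m n s' (phi m n r')) = Bf m n (phi m n r) (f_pow m n (s + s') (phi m n r'))"
    by (simp add: Bf_pow f_pow_add)
  consider (lt) "r' < r" | (eq) "r = r'" | (gt) "r < r'" by arith
  then show ?thesis
  proof cases
    case lt
    have "s + s' = m + n - r - r'" using assms by arith
    then show ?thesis unfolding e using ortho_off[OF lt assms(1)] lt by simp
  next
    case eq
    have "s + s' = m + n - 2 * r" using assms eq by arith
    then show ?thesis unfolding e using norm[OF assms(1)] eq by simp
  next
    case gt
    have ss: "s + s' = m + n - r' - r" using assms by arith
    have "Bf m n (phi m n r) (f_pow m n (s + s') (phi m n r')) = Bf m n (f_pow m n (s + s') (phi m n r')) (phi m n r)"
      by (rule Bf_sym)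
    also have "\<dots> = Bf m n (phi m n r') (f_pow m n (s + s') (phi m n r))" by (rule Bf_pow)
    also have "\<dots> = 0" unfolding ss by (rule ortho_off[OF gt assms(2)])
    finally show ?thesis unfolding e using gt by simp
  qed
qed

lemma Bf_adiag: assumes "adiag p v" "p \<le> m + n"
  shows "Bf m n v w = (\<Sum>c<min (min m n) (min p (m + n - p)) + 1.
     v (p - n + c) (p - (p - n + c)) * w (m - (p - n + c)) (n - (p - (p - n + c))))"
proof -
  let ?d = "min (min m n) (min p (m + n - p)) + 1"
  let ?F = "\<lambda>a. v a (p - a) * w (m - a) (n - (p - a))"
  have inner: "(\<Sum>b\<le>n. v a b * w (m - a) (n - b)) = (if a \<in> {a. a \<le> p \<and> p - a \<le> n} then ?F a else 0)" for a
  proof -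
    have "(\<Sum>b\<le>n. v a b * w (m - a) (n - b)) = (\<Sum>b\<le>n. if b = p - a then (if a \<le> p then ?F a else 0) else 0)"
      by (rule sum.cong[OF refl]) (use assms(1) in \<open>auto simp: adiag_def\<close>)
    also have "\<dots> = (if a \<in> {a. a \<le> p \<and> p - a \<le> n} then ?F a else 0)"
      by (simp add: sum.delta')
    finally show ?thesis .
  qed
  have "Bf m n v w = (\<Sum>a\<le>m. if a \<in> {a. a \<le> p \<and> p - a \<le> n} then ?F a else 0)"
    unfolding Bf_def inner ..
  also have "\<dots> = (\<Sum>a\<in>{..m} \<inter> {a. a \<le> p \<and> p - a \<le> n}. ?F a)"
    by (rule sum.inter_restrict[symmetric]) simp
  also have "{..m} \<inter> {a. a \<le> p \<and> p - a \<le> n} = (\<lambda>c. p - n + c) ` {..<?d}"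
  proof (intro equalityI subsetI)
    fix a assume "a \<in> {..m} \<inter> {a. a \<le> p \<and> p - a \<le> n}"
    then have "a \<le> m" "a \<le> p" "p - a \<le> n" by auto
    then have "a - (p - n) < ?d" "a = p - n + (a - (p - n))" using assms(2) by arith+
    then show "a \<in> (\<lambda>c. p - n + c) ` {..<?d}" by blast
  next
    fix a assume "a \<in> (\<lambda>c. p - n + c) ` {..<?d}"
    then obtain c where "c < ?d" "a = p - n + c" by blast
    then show "a \<in> {..m} \<inter> {a. a \<le> p \<and> p - a \<le> n}" using assms(2) by auto
  qed
  also have "(\<Sum>a\<in>(\<lambda>c. p - n + c) ` {..<?d}. ?F a) = (\<Sum>c<?d. ?F (p - n + c))"
    by (subst sum.reindex) (auto simp: inj_on_def)
  finally show ?thesis .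
qed

lemma mat_mult_entry: "r < d \<Longrightarrow> r' < d \<Longrightarrow> (mat d d f * mat d d g) $$ (r, r') = (\<Sum>c<d. f (r, c) * g (c, r'))"
  by (simp add: scalar_prod_def lessThan_atLeast0)


lemma Dnorm_real: assumes "k \<le> min m n"
  shows "real (Dnorm m n k) = real (m + n - k + 1) / real (m + n - 2 * k + 1)
          * (fact (m + n - k) / (fact (m - k) * fact (n - k) * fact k))"
proof -
  define N where "N = m + n - k"
  define L where "L = m + n - 2 * k"
  have k1: "k \<le> Suc N" and e1: "Suc N - k = Suc L" and k2: "m - k \<le> L" and e2: "L - (m - k) = n - k"
    using assms unfolding N_def L_def by arith+
  have "real (Dnorm m n k) = real (Suc N choose k) * real (L choose (m - k))"
    unfolding Dnorm_def N_def L_def by simp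
  also have "\<dots> = (fact (Suc N) / (fact k * fact (Suc L))) * (fact L / (fact (m - k) * fact (n - k)))"
    using binomial_fact[OF k1, where 'a=real] binomial_fact[OF k2, where 'a=real] e1 e2 by simp
  also have "\<dots> = real (Suc N) / real (Suc L) * (fact N / (fact (m - k) * fact (n - k) * fact k))"
  proof -
    have nz: "(fact L :: real) \<noteq> 0" "(fact k :: real) \<noteq> 0" "(fact (m - k) :: real) \<noteq> 0" "(fact (n - k) :: real) \<noteq> 0"
      "real (Suc L) \<noteq> 0" by simp_all
    show ?thesis unfolding fact_Suc using nz by (simp add: divide_simps del: of_nat_Suc)
  qed
  finally show ?thesis unfolding N_def L_def by simp
qed


lemma mat_mult_entry2: "A \<in> carrier_mat d d \<Longrightarrow> B \<in> carrier_mat d d \<Longrightarrow> r < d \<Longrightarrow> r' < d \<Longrightarrow>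
  (A * B) $$ (r, r') = (\<Sum>c<d. A $$ (r, c) * B $$ (c, r'))"
  by (auto simp: scalar_prod_def lessThan_atLeast0 intro!: sum.cong)

theorem theorem4p10:
  fixes m n k i j :: nat
  assumes "k \<le> min m n" and "i \<le> m" and "j \<le> n"
    and "k \<le> i + j" and "i + j \<le> m + n - k"
  shows "CG m n k i j = (-1) ^ k / of_nat (Dnorm m n k) * c_coord m n k (m - i) (n - j)
     \<and> (real (Dnorm m n k) = real (m + n - k + 1) / real (m + n - 2 * k + 1)
          * (fact (m + n - k) / (fact (m - k) * fact (n - k) * fact k)))"
proof -
  define p where "p = i + j"
  define q where "q = m + n - p"
  define d where "d = min (min m n) (min p (m + n - p)) + 1"
  define lo where "lo = p - n"
  have pmn: "p \<le> m + n" unfolding p_def using assms by arith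
  have adm_iff: "adm m n i j r \<longleftrightarrow> r < d" for r
    unfolding adm_def d_def p_def using pmn[unfolded p_def] by arith
  have rmin: "r \<le> min m n" if "r < d" for r using that unfolding d_def by arith
  have rp: "r \<le> p" if "r < d" for r using that unfolding d_def by arith
  have rq: "r \<le> q" if "r < d" for r using that unfolding d_def q_def by arith
  define X where "X = mat d d (\<lambda>(r, c). f_pow m n (p - r) (phi m n r) (lo + c) (p - (lo + c)))"
  define Y where "Y = mat d d (\<lambda>(c, r). (-1) ^ r / of_nat (Dnorm m n r) * f_pow m n (q - r) (phi m n r) (m - (lo + c)) (n - (p - (lo + c))))"
  have Xc: "X \<in> carrier_mat d d" and Yc: "Y \<in> carrier_mat d d" unfolding X_def Y_def by simp_all
  have XY: "X * Y = 1\<^sub>m d"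
  proof (rule eq_matI)
    fix r r' assume r: "r < dim_row (1\<^sub>m d :: complex mat)" and r': "r' < dim_col (1\<^sub>m d :: complex mat)"
    then have r: "r < d" and r': "r' < d" by auto
    have ad: "adiag p (f_pow m n (p - r) (phi m n r))"
      using adiag_f_pow[OF adiag_phi[OF rmin[OF r]], where s = "p - r" and m = m and n = n] rp[OF r] by simp
    have "(X * Y) $$ (r, r') = (\<Sum>c<d. f_pow m n (p - r) (phi m n r) (lo + c) (p - (lo + c)) *
        ((-1) ^ r' / of_nat (Dnorm m n r') * f_pow m n (q - r') (phi m n r') (m - (lo + c)) (n - (p - (lo + c)))))"
      unfolding mat_mult_entry2[OF Xc Yc r r'] by (rule sum.cong[OF refl]) (simp add: X_def Y_def r r')
    also have "\<dots> = (-1) ^ r' / of_nat (Dnorm m n r') * (\<Sum>c<d. f_pow m n (p - r) (phi m n r) (lo + c) (p - (lo + c)) *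
        f_pow m n (q - r') (phi m n r') (m - (lo + c)) (n - (p - (lo + c))))"
      by (simp add: sum_distrib_left algebra_simps)
    also have "(\<Sum>c<d. f_pow m n (p - r) (phi m n r) (lo + c) (p - (lo + c)) *
        f_pow m n (q - r') (phi m n r') (m - (lo + c)) (n - (p - (lo + c))))
       = Bf m n (f_pow m n (p - r) (phi m n r)) (f_pow m n (q - r') (phi m n r'))"
      unfolding Bf_adiag[OF ad pmn] d_def lo_def ..
    also have "\<dots> = (if r = r' then (-1) ^ r * of_nat (Dnorm m n r) else 0)"
      by (rule ortho[OF rmin[OF r] rmin[OF r']]) (use rp[OF r] rq[OF r'] pmn in \<open>simp add: q_def\<close>)
    also have "(-1) ^ r' / of_nat (Dnorm m n r') * \<dots> = (1\<^sub>m d :: complex mat) $$ (r, r')"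
      using Dnorm_pos[OF rmin[OF r]] sign_sq[of r] r r' by auto
    finally show "(X * Y) $$ (r, r') = (1\<^sub>m d :: complex mat) $$ (r, r')" .
  qed (simp_all add: X_def Y_def)
  have YX: "Y * X = 1\<^sub>m d"
    by (rule mat_mult_left_right_inverse[OF _ _ XY]) (simp_all add: X_def Y_def)
  define Cf where "Cf k = (if adm m n i j k then (-1) ^ k / of_nat (Dnorm m n k) * c_coord m n k (m - i) (n - j) else 0)" for k
  define P where "P C \<longleftrightarrow> (\<forall>k. \<not> adm m n i j k \<longrightarrow> C k = 0) \<and>
      basis_vec m n i j = (\<lambda>a b. \<Sum>k = 0..min m n. C k * f_pow m n (i + j - k) (phi m n k) a b)" for C :: "nat \<Rightarrow> complex"
  have key: "Bf m n (basis_vec m n i j) (f_pow m n (q - k0) (phi m n k0)) = C k0 * ((-1) ^ k0 * of_nat (Dnorm m n k0))"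
    if PC: "P C" and k0: "k0 < d" for C k0
  proof -
    have C0: "\<And>k. \<not> adm m n i j k \<Longrightarrow> C k = 0" and B: "basis_vec m n i j = (\<lambda>a b. \<Sum>k = 0..min m n. C k * f_pow m n (i + j - k) (phi m n k) a b)"
      using PC unfolding P_def by auto
    have "Bf m n (basis_vec m n i j) (f_pow m n (q - k0) (phi m n k0))
        = (\<Sum>k = 0..min m n. C k * Bf m n (f_pow m n (i + j - k) (phi m n k)) (f_pow m n (q - k0) (phi m n k0)))"
      unfolding B by (rule Bf_sum_left)
    also have "\<dots> = (\<Sum>k = 0..min m n. if k = k0 then C k0 * ((-1) ^ k0 * of_nat (Dnorm m n k0)) else 0)"
    proof (rule sum.cong[OF refl])
      fix k assume "k \<in> {0..min m n}"
      show "C k * Bf m n (f_pow m n (i + j - k) (phi m n k)) (f_pow m n (q - k0) (phi m n k0)) =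
          (if k = k0 then C k0 * ((-1) ^ k0 * of_nat (Dnorm m n k0)) else 0)"
      proof (cases "k < d")
        case True
        have "Bf m n (f_pow m n (i + j - k) (phi m n k)) (f_pow m n (q - k0) (phi m n k0)) = (if k = k0 then (-1) ^ k * of_nat (Dnorm m n k) else 0)"
          by (rule ortho[OF rmin[OF True] rmin[OF k0]]) (use rp[OF True] rq[OF k0] pmn in \<open>simp add: q_def p_def\<close>)
        then show ?thesis by simp
      next
        case False
        then have "C k = 0" using C0 adm_iff by blast
        moreover have "k \<noteq> k0" using False k0 by auto
        ultimately show ?thesis by simp
      qed
    qed
    also have "\<dots> = C k0 * ((-1) ^ k0 * of_nat (Dnorm m n k0))"
      using rmin[OF k0] by (simp add: sum.delta')
    finally show ?thesis .
  qed
  have uniq: "C1 = C2" if "P C1" "P C2" for C1 C2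
  proof
    fix k
    show "C1 k = C2 k"
    proof (cases "k < d")
      case True
      have "C1 k * ((-1) ^ k * of_nat (Dnorm m n k)) = C2 k * ((-1) ^ k * of_nat (Dnorm m n k))"
        by (simp only: key[OF that(1) True, symmetric] key[OF that(2) True, symmetric])
      moreover have "((-1) ^ k * of_nat (Dnorm m n k) :: complex) \<noteq> 0"
        using Dnorm_pos[OF rmin[OF True]] by simp
      ultimately show ?thesis by simp
    next
      case False
      then show ?thesis using that unfolding P_def adm_iff by auto
    qed
  qed
  have PCf: "P Cf"
    unfolding P_def
  proof (intro conjI allI impI)
    fix k assume "\<not> adm m n i j k" then show "Cf k = 0" unfolding Cf_def by simp
  next
    show "basis_vec m n i j = (\<lambda>a b. \<Sum>k = 0..min m n. Cf k * f_pow m n (i + j - k) (phi m n k) a b)"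
    proof (intro ext)
      fix a b
      show "basis_vec m n i j a b = (\<Sum>k = 0..min m n. Cf k * f_pow m n (i + j - k) (phi m n k) a b)"
      proof (cases "a \<le> m \<and> b \<le> n \<and> a + b = p")
        case False
        have "Cf k * f_pow m n (i + j - k) (phi m n k) a b = 0" if "k \<in> {0..min m n}" for k
        proof (cases "adm m n i j k")
          case True
          then have kd: "k < d" using adm_iff by simp
          have bx: "boxed m n (f_pow m n (i + j - k) (phi m n k))" by (rule boxed_f_pow[OF boxed_phi[OF rmin[OF kd]]])
          have "adiag (k + (i + j - k)) (f_pow m n (i + j - k) (phi m n k))" by (rule adiag_f_pow[OF adiag_phi[OF rmin[OF kd]]])
          then have ad: "adiag p (f_pow m n (i + j - k) (phi m n k))" using rp[OF kd] unfolding p_def by simp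
          show ?thesis using False bx ad unfolding boxed_def adiag_def by auto
        next
          case False then show ?thesis unfolding Cf_def by simp
        qed
        then have "(\<Sum>k = 0..min m n. Cf k * f_pow m n (i + j - k) (phi m n k) a b) = 0" by (rule sum.neutral[OF ballI])
        moreover have "basis_vec m n i j a b = 0" using False unfolding basis_vec_def p_def by auto
        ultimately show ?thesis by simp
      next
        case True
        then have am: "a \<le> m" and bn: "b \<le> n" and ab: "a + b = p" by auto
        define c' where "c' = a - lo"
        define c0 where "c0 = i - lo"
        have c': "c' < d" "a = lo + c'" unfolding c'_def lo_def d_def using am bn ab pmn by arith+
        have c0: "c0 < d" "i = lo + c0" unfolding c0_def lo_def d_def p_def using assms pmn[unfolded p_def] by arith+
        have "(\<Sum>k = 0..min m n. Cf k * f_pow m n (i + j - k) (phi m n k) a b) = (\<Sum>r\<in>{..<d}. Cf r * f_pow m n (i + j - r) (phi m n r) a b)"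
        proof (rule sum.mono_neutral_right)
          show "{..<d} \<subseteq> {0..min m n}" using rmin by auto
          show "\<forall>k\<in>{0..min m n} - {..<d}. Cf k * f_pow m n (i + j - k) (phi m n k) a b = 0"
            unfolding Cf_def using adm_iff by auto
        qed simp
        also have "\<dots> = (\<Sum>r<d. Y $$ (c0, r) * X $$ (r, c'))"
        proof (rule sum.cong[OF refl])
          fix r assume "r \<in> {..<d}"
          then have r: "r < d" by simp
          have y: "Y $$ (c0, r) = Cf r"
          proof -
            have "Y $$ (c0, r) = (-1) ^ r / of_nat (Dnorm m n r) * f_pow m n (q - r) (phi m n r) (m - i) (n - j)"
              unfolding Y_def using c0 r by (simp add: p_def)
            also have "\<dots> = Cf r"
            proof -
              have qe: "q - r = m - i + (n - j) - r" using assms unfolding q_def p_def by arith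
              show ?thesis unfolding Cf_def c_coord_def qe using adm_iff r by simp
            qed
            finally show ?thesis .
          qed
          have x: "X $$ (r, c') = f_pow m n (i + j - r) (phi m n r) a b"
          proof -
            have bb: "p - (lo + c') = b" using c'(2) ab by arith
            show ?thesis unfolding X_def using c' r bb by (simp add: p_def)
          qed
          show "Cf r * f_pow m n (i + j - r) (phi m n r) a b = Y $$ (c0, r) * X $$ (r, c')"
            unfolding x y ..
        qed
        also have "\<dots> = (Y * X) $$ (c0, c')"
          by (rule mat_mult_entry2[symmetric, OF Yc Xc c0(1) c'(1)])
        also have "\<dots> = (if c0 = c' then 1 else 0)" unfolding YX using c0 c' by simp
        also have "\<dots> = basis_vec m n i j a b"
          unfolding basis_vec_def using c0 c' ab assms by (auto simp: p_def)
        finally show ?thesis ..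
      qed
    qed
  qed
  have "CG_family m n i j = Cf"
    unfolding CG_family_def P_def[symmetric] by (rule the_equality[where P = P, OF PCf]) (rule uniq[OF _ PCf])
  then have "CG m n k i j = Cf k" unfolding CG_def by simp
  also have "\<dots> = (-1) ^ k / of_nat (Dnorm m n k) * c_coord m n k (m - i) (n - j)"
    unfolding Cf_def adm_def using assms by auto
  finally show ?thesis using Dnorm_real[OF assms(1)] by simp
qed


end
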